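(* Let $n\ge 1$, let $K:(0,\infty)\to(0,\infty)$ be a smooth function, and let $\Phi$ be an antiderivative of $\sqrt{K}$ on $(0,\infty)$ (for instance $\Phi(\varrho)=\int_0^\varrho\sqrt{K(s)}\,ds$ when this integral converges). Let $\varphi:(0,\infty)\to\mathbb{R}$ and $F:(0,\infty)\to\mathbb{R}$ be smooth functions satisfying $$\sqrt{\varrho}\,\varphi'(\varrho)=\sqrt{K(\varrho)},\qquad F'(\varrho)=\sqrt{K(\varrho)\,\varrho}\qquad(\varrho>0).$$ Then for every smooth positive function $\varrho:\Omega\to(0,\infty)$ on an open set $\Omega\subset\mathbb{R}^n$, $$\varrho\,\nabla\Bigl(\sqrt{K(\varrho)}\,\Delta\bigl(\Phi(\varrho)\bigr)\Bigr)={\rm div}\Bigl(F(\varrho)\,\nabla\nabla\varphi(\varrho)\Bigr)-\nabla\Bigl(\bigl(F(\varrho)-\varrho F'(\varrho)\bigr)\,\Delta\varphi(\varrho)\Bigr)$$ holds on $\Omega$.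
   Context: $\nabla\nabla\varphi(\varrho)$ denotes the Hessian matrix of the function $x\mapsto\varphi(\varrho(x))$, and ${\rm div}$ of a matrix field $M$ is the vector field with components $({\rm div} M)_i=\sum_j\partial_j M_{ij}$. $\Delta$ is the Laplacian. In the special case $K(\varrho)=c/\varrho$ this identity reduces to the quantum Bohm identity $2\varrho\,{\rm div}(\Delta\sqrt{\varrho}/\sqrt{\varrho})={\rm div}(\varrho\nabla\nabla\log\varrho)$ (up to the constant $c$). *)

theory Defs
  imports "HOL-Analysis.Analysis"
begin

definition pd :: "'n::finite \<Rightarrow> (real^'n \<Rightarrow> real) \<Rightarrow> real^'n \<Rightarrow> real" where
  "pd i f x = deriv (\<lambda>t. f (x + t *\<^sub>R axis i 1)) 0"

fun pds :: "'n::finite list \<Rightarrow> (real^'n \<Rightarrow> real) \<Rightarrow> real^'n \<Rightarrow> real" where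
  "pds [] f = f"
| "pds (i # is) f = pd i (pds is f)"

definition smooth_on :: "(real^'n::finite) set \<Rightarrow> (real^'n \<Rightarrow> real) \<Rightarrow> bool" where
  "smooth_on S f \<longleftrightarrow> (\<forall>is. \<forall>x\<in>S. pds is f differentiable (at x))"

definition smooth_on1 :: "real set \<Rightarrow> (real \<Rightarrow> real) \<Rightarrow> bool" where
  "smooth_on1 S f \<longleftrightarrow> (\<forall>k. \<forall>x\<in>S. (deriv ^^ k) f differentiable (at x))"

definition lap :: "(real^'n::finite \<Rightarrow> real) \<Rightarrow> real^'n \<Rightarrow> real" where
  "lap f x = (\<Sum>i\<in>UNIV. pd i (pd i f) x)"

end

theory Submission
  imports Defs
begin


lemma dir_has:
  fixes f :: "real^'n::finite \<Rightarrow> real"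
  assumes "(f has_derivative f') (at (z + s *\<^sub>R v))"
  shows "((\<lambda>r. f (z + r *\<^sub>R v)) has_real_derivative f' v) (at s)"
proof -
  have l: "((\<lambda>r. z + r *\<^sub>R v) has_derivative (\<lambda>r. r *\<^sub>R v)) (at s)"
    by (auto intro!: derivative_eq_intros)
  have "((\<lambda>r. f (z + r *\<^sub>R v)) has_derivative (\<lambda>r. f' (r *\<^sub>R v))) (at s)"
    using has_derivative_compose[OF l assms] by simp
  moreover have "(\<lambda>r. f' (r *\<^sub>R v)) = (\<lambda>r. r * f' v)"
    using assms has_derivative_linear linear_scale by (metis real_scaleR_def)
  ultimately show ?thesis
    by (simp add: has_field_derivative_def mult.commute[of _ "f' v"])
qed

lemma pd_frechet:
  fixes f :: "real^'n::finite \<Rightarrow> real"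
  assumes "(f has_derivative f') (at y)"
  shows "pd i f y = f' (axis i 1)"
proof -
  have "((\<lambda>r. f (y + r *\<^sub>R axis i 1)) has_real_derivative f' (axis i 1)) (at 0)"
    using dir_has[of f f' y 0] assms by simp
  then show ?thesis unfolding pd_def by (rule DERIV_imp_deriv)
qed

lemma pd_has:
  fixes f :: "real^'n::finite \<Rightarrow> real"
  assumes "f differentiable (at (z + s *\<^sub>R axis i 1))"
  shows "((\<lambda>r. f (z + r *\<^sub>R axis i 1)) has_real_derivative pd i f (z + s *\<^sub>R axis i 1)) (at s)"
proof -
  obtain f' where d: "(f has_derivative f') (at (z + s *\<^sub>R axis i 1))"
    using assms differentiable_def by blast
  show ?thesis using dir_has[OF d] pd_frechet[OF d] by simp
qed

lemma pd_has0:
  fixes f :: "real^'n::finite \<Rightarrow> real"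
  assumes "f differentiable (at y)"
  shows "((\<lambda>r. f (y + r *\<^sub>R axis i 1)) has_real_derivative pd i f y) (at 0)"
  using pd_has[of f y 0 i] assms by simp

lemma pd_eqI:
  "((\<lambda>r. f (y + r *\<^sub>R axis i 1)) has_real_derivative D) (at 0) \<Longrightarrow> pd i f y = D"
  unfolding pd_def by (rule DERIV_imp_deriv)

lemma pd_mult:
  fixes f g :: "real^'n::finite \<Rightarrow> real"
  assumes "f differentiable (at y)" "g differentiable (at y)"
  shows "pd i (\<lambda>z. f z * g z) y = pd i f y * g y + f y * pd i g y"
  apply (rule pd_eqI)
  using DERIV_mult[OF pd_has0[OF assms(1), of i] pd_has0[OF assms(2), of i]] by (simp add: mult.commute)

lemma pd_add:
  fixes f g :: "real^'n::finite \<Rightarrow> real"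
  assumes "f differentiable (at y)" "g differentiable (at y)"
  shows "pd i (\<lambda>z. f z + g z) y = pd i f y + pd i g y"
  apply (rule pd_eqI)
  using DERIV_add[OF pd_has0[OF assms(1), of i] pd_has0[OF assms(2), of i]] by simp

lemma pd_diff:
  fixes f g :: "real^'n::finite \<Rightarrow> real"
  assumes "f differentiable (at y)" "g differentiable (at y)"
  shows "pd i (\<lambda>z. f z - g z) y = pd i f y - pd i g y"
  apply (rule pd_eqI)
  using DERIV_diff[OF pd_has0[OF assms(1), of i] pd_has0[OF assms(2), of i]] by simp

lemma pd_sum:
  fixes f :: "'a \<Rightarrow> real^'n::finite \<Rightarrow> real"
  assumes "\<And>j. j \<in> A \<Longrightarrow> f j differentiable (at y)"
  shows "pd i (\<lambda>z. \<Sum>j\<in>A. f j z) y = (\<Sum>j\<in>A. pd i (f j) y)"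
  apply (rule pd_eqI)
  apply (rule DERIV_sum)
  using pd_has0[OF assms] by simp

lemma pd_comp:
  fixes f :: "real^'n::finite \<Rightarrow> real"
  assumes "DERIV h (f y) :> d" "f differentiable (at y)"
  shows "pd i (\<lambda>z. h (f z)) y = d * pd i f y"
  apply (rule pd_eqI)
  using DERIV_chain2[OF _ pd_has0[OF assms(2)], of h d i] assms(1) by simp

lemma diff_comp:
  fixes f :: "real^'n::finite \<Rightarrow> real"
  assumes "DERIV h (f y) :> d" "f differentiable (at y)"
  shows "(\<lambda>z. h (f z)) differentiable (at y)"
proof -
  have "h differentiable (at (f y))"
    using assms(1) real_differentiable_def
    by (metis differentiableI has_field_derivative_imp_has_derivative)
  then show ?thesis using differentiable_chain_at[OF assms(2)] by (simp add: o_def)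
qed

lemma pd_cong:
  fixes f g :: "real^'n::finite \<Rightarrow> real"
  assumes "open S" "y \<in> S" "\<And>z. z \<in> S \<Longrightarrow> f z = g z"
  shows "pd i f y = pd i g y"
proof -
  have c: "continuous_on UNIV (\<lambda>t::real. y + t *\<^sub>R axis i 1)"
    by (intro continuous_intros)
  have o: "open ((\<lambda>t::real. y + t *\<^sub>R axis i 1) -` S)"
    using open_vimage[OF assms(1) c] .
  have "eventually (\<lambda>t. f (y + t *\<^sub>R axis i 1) = g (y + t *\<^sub>R axis i 1)) (nhds 0)"
    unfolding eventually_nhds
    using o assms by (intro exI[of _ "(\<lambda>t::real. y + t *\<^sub>R axis i 1) -` S"]) auto
  then show ?thesis unfolding pd_def by (rule deriv_cong_ev) simp
qed

lemma diff_cong: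
  fixes f g :: "real^'n::finite \<Rightarrow> real"
  assumes "open S" "y \<in> S" "\<And>z. z \<in> S \<Longrightarrow> f z = g z" "f differentiable (at y)"
  shows "g differentiable (at y)"
  using assms has_derivative_transform_within_open unfolding differentiable_def by metis



lemma dist_pt:
  fixes x :: "real^'n::finite"
  shows "dist (x + a *\<^sub>R axis i 1 + b *\<^sub>R axis j 1) x \<le> \<bar>a\<bar> + \<bar>b\<bar>"
proof -
  have "dist (x + a *\<^sub>R axis i 1 + b *\<^sub>R axis j 1) x = norm (a *\<^sub>R axis i (1::real) + b *\<^sub>R axis j 1)"
    by (simp add: dist_norm algebra_simps)
  also have "\<dots> \<le> norm (a *\<^sub>R axis i (1::real)) + norm (b *\<^sub>R axis j (1::real))"
    by (rule norm_triangle_ineq)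
  finally show ?thesis by simp
qed

lemma route:
  fixes f :: "real^'n::finite \<Rightarrow> real"
  assumes d1: "\<forall>y\<in>ball x \<delta>. f differentiable (at y)"
    and d2: "\<forall>y\<in>ball x \<delta>. pd i f differentiable (at y)"
    and t: "0 < t" "2*t < \<delta>"
  shows "\<exists>p. dist p x < \<delta> \<and> f (x + t *\<^sub>R axis j 1 + t *\<^sub>R axis i 1) - f (x + t *\<^sub>R axis i 1)
           - f (x + t *\<^sub>R axis j 1) + f x = t^2 * pd j (pd i f) p"
proof -
  define ei :: "real^'n" where "ei = axis i 1"
  define ej :: "real^'n" where "ej = axis j 1"
  have inb: "x + a *\<^sub>R axis k 1 + b *\<^sub>R axis l 1 \<in> ball x \<delta>" if "0 \<le> a" "a \<le> t" "0 \<le> b" "b \<le> t" for a b k l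
  proof -
    have "dist (x + a *\<^sub>R axis k 1 + b *\<^sub>R axis l 1) x \<le> \<bar>a\<bar> + \<bar>b\<bar>" by (rule dist_pt)
    then show ?thesis using that t by (simp add: dist_commute)
  qed
  define u where "u r = f ((x + t *\<^sub>R ej) + r *\<^sub>R ei) - f (x + r *\<^sub>R ei)" for r
  have du: "DERIV u r :> pd i f (x + t *\<^sub>R ej + r *\<^sub>R ei) - pd i f (x + r *\<^sub>R ei)" if "0 \<le> r" "r \<le> t" for r
  proof -
    have a: "f differentiable (at ((x + t *\<^sub>R ej) + r *\<^sub>R axis i 1))"
      using d1 inb[of t r j i] that t unfolding ej_def by simp
    have b: "f differentiable (at (x + r *\<^sub>R axis i 1))"
      using d1 inb[of r 0 i j] that t by simp
    show ?thesis unfolding u_def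
      using DERIV_diff[OF pd_has[OF a] pd_has[OF b]] unfolding ei_def by simp
  qed
  obtain \<sigma> where s: "0 < \<sigma>" "\<sigma> < t" and su: "u t - u 0 = (t - 0) * (pd i f (x + t *\<^sub>R ej + \<sigma> *\<^sub>R ei) - pd i f (x + \<sigma> *\<^sub>R ei))"
    using MVT2[of 0 t u "\<lambda>r. pd i f (x + t *\<^sub>R ej + r *\<^sub>R ei) - pd i f (x + r *\<^sub>R ei)"] du t by auto
  define v where "v r = pd i f ((x + \<sigma> *\<^sub>R ei) + r *\<^sub>R ej)" for r
  have dv: "DERIV v r :> pd j (pd i f) (x + \<sigma> *\<^sub>R ei + r *\<^sub>R ej)" if "0 \<le> r" "r \<le> t" for r
  proof -
    have a: "pd i f differentiable (at ((x + \<sigma> *\<^sub>R ei) + r *\<^sub>R axis j 1))"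
      using d2 inb[of \<sigma> r i j] that s unfolding ei_def by simp
    show ?thesis unfolding v_def using pd_has[OF a] unfolding ej_def by simp
  qed
  obtain \<tau> where tt: "0 < \<tau>" "\<tau> < t" and tv: "v t - v 0 = (t - 0) * pd j (pd i f) (x + \<sigma> *\<^sub>R ei + \<tau> *\<^sub>R ej)"
    using MVT2[of 0 t v "\<lambda>r. pd j (pd i f) (x + \<sigma> *\<^sub>R ei + r *\<^sub>R ej)"] dv t by auto
  have "v t - v 0 = pd i f (x + t *\<^sub>R ej + \<sigma> *\<^sub>R ei) - pd i f (x + \<sigma> *\<^sub>R ei)"
    unfolding v_def by (simp add: algebra_simps)
  then have eq: "u t - u 0 = t^2 * pd j (pd i f) (x + \<sigma> *\<^sub>R ei + \<tau> *\<^sub>R ej)"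
    using su tv by (simp add: power2_eq_square)
  have "dist (x + \<sigma> *\<^sub>R ei + \<tau> *\<^sub>R ej) x < \<delta>"
    using inb[of \<sigma> \<tau> i j] s tt unfolding ei_def ej_def by (simp add: dist_commute)
  moreover have "u t - u 0 = f (x + t *\<^sub>R axis j 1 + t *\<^sub>R axis i 1) - f (x + t *\<^sub>R axis i 1)
           - f (x + t *\<^sub>R axis j 1) + f x"
    unfolding u_def ei_def ej_def by simp
  ultimately show ?thesis using eq by metis
qed

lemma schwarz:
  fixes f :: "real^'n::finite \<Rightarrow> real"
  assumes S: "open S" "x \<in> S"
    and d0: "\<forall>y\<in>S. f differentiable (at y)"
    and di: "\<forall>y\<in>S. pd i f differentiable (at y)"
    and dj: "\<forall>y\<in>S. pd j f differentiable (at y)"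
    and cij: "continuous (at x) (pd j (pd i f))"
    and cji: "continuous (at x) (pd i (pd j f))"
  shows "pd j (pd i f) x = pd i (pd j f) x"
proof (rule ccontr)
  assume ne: "pd j (pd i f) x \<noteq> pd i (pd j f) x"
  define A where "A = pd j (pd i f) x"
  define B where "B = pd i (pd j f) x"
  define e where "e = \<bar>A - B\<bar> / 2"
  have e: "e > 0" using ne unfolding e_def A_def B_def by simp
  obtain d1 where d1: "d1 > 0" "\<forall>y. dist y x < d1 \<longrightarrow> dist (pd j (pd i f) y) A < e"
    using cij e unfolding continuous_at_eps_delta A_def by blast
  obtain d2 where d2: "d2 > 0" "\<forall>y. dist y x < d2 \<longrightarrow> dist (pd i (pd j f) y) B < e"
    using cji e unfolding continuous_at_eps_delta B_def by blast
  obtain d0 where d0': "d0 > 0" "ball x d0 \<subseteq> S"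
    using S openE by blast
  define d where "d = min d0 (min d1 d2)"
  have d: "d > 0" using d0' d1 d2 unfolding d_def by simp
  define t where "t = d / 3"
  have t: "0 < t" "2*t < d" using d unfolding t_def by auto
  have bS: "ball x d \<subseteq> S" using d0' unfolding d_def by auto
  obtain p where p: "dist p x < d" and pe: "f (x + t *\<^sub>R axis j 1 + t *\<^sub>R axis i 1) - f (x + t *\<^sub>R axis i 1)
           - f (x + t *\<^sub>R axis j 1) + f x = t^2 * pd j (pd i f) p"
    using route[of x d f i t j] d0 di bS t by blast
  obtain q where q: "dist q x < d" and qe: "f (x + t *\<^sub>R axis i 1 + t *\<^sub>R axis j 1) - f (x + t *\<^sub>R axis j 1)
           - f (x + t *\<^sub>R axis i 1) + f x = t^2 * pd i (pd j f) q"
    using route[of x d f j t i] d0 dj bS t by blast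
  have "t^2 * pd j (pd i f) p = t^2 * pd i (pd j f) q"
    using pe qe by (simp add: algebra_simps)
  then have pq: "pd j (pd i f) p = pd i (pd j f) q" using t by simp
  have "dist (pd j (pd i f) p) A < e" using d1 p unfolding d_def by auto
  moreover have "dist (pd i (pd j f) q) B < e" using d2 q unfolding d_def by auto
  ultimately have "\<bar>A - B\<bar> < 2 * e" using pq by (simp add: dist_real_def)
  then show False unfolding e_def by simp
qed



locale cctx =
  fixes S :: "(real^'n::finite) set" and \<rho> :: "real^'n \<Rightarrow> real"
    and h h1 h2 h3 :: "real \<Rightarrow> real"
  assumes S: "open S"
    and sm: "\<And>is y. y \<in> S \<Longrightarrow> pds is \<rho> differentiable (at y)"
    and pos: "\<And>y. y \<in> S \<Longrightarrow> \<rho> y > 0"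
    and dh: "\<And>s. s > 0 \<Longrightarrow> DERIV h s :> h1 s"
    and dh1: "\<And>s. s > 0 \<Longrightarrow> DERIV h1 s :> h2 s"
    and dh2: "\<And>s. s > 0 \<Longrightarrow> DERIV h2 s :> h3 s"
begin

lemma r0: "y \<in> S \<Longrightarrow> \<rho> differentiable (at y)" using sm[of y "[]"] by simp
lemma r1: "y \<in> S \<Longrightarrow> pd j \<rho> differentiable (at y)" using sm[of y "[j]"] by simp
lemma r2: "y \<in> S \<Longrightarrow> pd i (pd j \<rho>) differentiable (at y)" using sm[of y "[i,j]"] by simp
lemma r3: "y \<in> S \<Longrightarrow> pd k (pd i (pd j \<rho>)) differentiable (at y)" using sm[of y "[k,i,j]"] by simp

lemma D0: "y \<in> S \<Longrightarrow> (\<lambda>z. h (\<rho> z)) differentiable (at y)"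
  by (rule diff_comp[OF dh r0]) (auto intro: pos)

lemma Dh1: "y \<in> S \<Longrightarrow> (\<lambda>z. h1 (\<rho> z)) differentiable (at y)"
  by (rule diff_comp[OF dh1 r0]) (auto intro: pos)
lemma Dh2: "y \<in> S \<Longrightarrow> (\<lambda>z. h2 (\<rho> z)) differentiable (at y)"
  by (rule diff_comp[OF dh2 r0]) (auto intro: pos)

lemma C1: "y \<in> S \<Longrightarrow> pd j (\<lambda>z. h (\<rho> z)) y = h1 (\<rho> y) * pd j \<rho> y"
  by (rule pd_comp[OF dh r0]) (auto intro: pos)

lemma D1: "y \<in> S \<Longrightarrow> pd j (\<lambda>z. h (\<rho> z)) differentiable (at y)"
  apply (rule diff_cong[OF S, of y "\<lambda>z. h1 (\<rho> z) * pd j \<rho> z"])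
    apply assumption
   apply (simp add: C1)
  by (intro differentiable_mult Dh1 r1)

lemma C2: "y \<in> S \<Longrightarrow> pd i (pd j (\<lambda>z. h (\<rho> z))) y
   = h2 (\<rho> y) * pd i \<rho> y * pd j \<rho> y + h1 (\<rho> y) * pd i (pd j \<rho>) y"
proof -
  assume y: "y \<in> S"
  have "pd i (pd j (\<lambda>z. h (\<rho> z))) y = pd i (\<lambda>z. h1 (\<rho> z) * pd j \<rho> z) y"
    by (rule pd_cong[OF S y]) (simp add: C1)
  also have "\<dots> = pd i (\<lambda>z. h1 (\<rho> z)) y * pd j \<rho> y + h1 (\<rho> y) * pd i (pd j \<rho>) y"
    by (rule pd_mult[OF Dh1[OF y] r1[OF y]])
  also have "pd i (\<lambda>z. h1 (\<rho> z)) y = h2 (\<rho> y) * pd i \<rho> y"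
    by (rule pd_comp[OF dh1 r0[OF y]]) (rule pos[OF y])
  finally show ?thesis by simp
qed

lemma D2: "y \<in> S \<Longrightarrow> pd i (pd j (\<lambda>z. h (\<rho> z))) differentiable (at y)"
  apply (rule diff_cong[OF S, of y "\<lambda>z. h2 (\<rho> z) * pd i \<rho> z * pd j \<rho> z + h1 (\<rho> z) * pd i (pd j \<rho>) z"])
    apply assumption
   apply (simp add: C2)
  by (intro differentiable_mult differentiable_add Dh1 Dh2 r1 r2)

lemma C3: "y \<in> S \<Longrightarrow> pd k (pd i (pd j (\<lambda>z. h (\<rho> z)))) y
   = h3 (\<rho> y) * pd k \<rho> y * pd i \<rho> y * pd j \<rho> y
     + h2 (\<rho> y) * (pd k (pd i \<rho>) y * pd j \<rho> y + pd i \<rho> y * pd k (pd j \<rho>) y)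
     + h2 (\<rho> y) * pd k \<rho> y * pd i (pd j \<rho>) y + h1 (\<rho> y) * pd k (pd i (pd j \<rho>)) y"
proof -
  assume y: "y \<in> S"
  have "pd k (pd i (pd j (\<lambda>z. h (\<rho> z)))) y
     = pd k (\<lambda>z. h2 (\<rho> z) * (pd i \<rho> z * pd j \<rho> z) + h1 (\<rho> z) * pd i (pd j \<rho>) z) y"
    by (rule pd_cong[OF S y]) (simp add: C2 mult.assoc)
  also have "\<dots> = pd k (\<lambda>z. h2 (\<rho> z) * (pd i \<rho> z * pd j \<rho> z)) y + pd k (\<lambda>z. h1 (\<rho> z) * pd i (pd j \<rho>) z) y"
    by (rule pd_add) (intro differentiable_mult Dh1 Dh2 r1 r2 y)+
  also have "pd k (\<lambda>z. h2 (\<rho> z) * (pd i \<rho> z * pd j \<rho> z)) y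
     = pd k (\<lambda>z. h2 (\<rho> z)) y * (pd i \<rho> y * pd j \<rho> y) + h2 (\<rho> y) * pd k (\<lambda>z. pd i \<rho> z * pd j \<rho> z) y"
    by (rule pd_mult) (intro differentiable_mult Dh2 r1 y)+
  also have "pd k (\<lambda>z. pd i \<rho> z * pd j \<rho> z) y = pd k (pd i \<rho>) y * pd j \<rho> y + pd i \<rho> y * pd k (pd j \<rho>) y"
    by (rule pd_mult) (intro r1 y)+
  also have "pd k (\<lambda>z. h1 (\<rho> z) * pd i (pd j \<rho>) z) y
     = pd k (\<lambda>z. h1 (\<rho> z)) y * pd i (pd j \<rho>) y + h1 (\<rho> y) * pd k (pd i (pd j \<rho>)) y"
    by (rule pd_mult) (intro Dh1 r2 y)+
  also have "pd k (\<lambda>z. h2 (\<rho> z)) y = h3 (\<rho> y) * pd k \<rho> y"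
    by (rule pd_comp[OF dh2 r0[OF y]]) (rule pos[OF y])
  also have "pd k (\<lambda>z. h1 (\<rho> z)) y = h2 (\<rho> y) * pd k \<rho> y"
    by (rule pd_comp[OF dh1 r0[OF y]]) (rule pos[OF y])
  finally show ?thesis by (simp add: algebra_simps)
qed

end



lemma alg:
  fixes q a a1 a2 F gi gj Hij Hjj Tj :: real
  assumes q: "q > 0"
  defines "p \<equiv> q^2"
  defines "b \<equiv> a / q"
  defines "b1 \<equiv> a1 / q - a / (2 * p * q)"
  defines "b2 \<equiv> a2 / q - a1 / (p * q) + 3 * a / (4 * p^2 * q)"
  defines "c \<equiv> a * q"
  defines "c1 \<equiv> a1 * q + a / (2 * q)"
  shows "p * (a1 * gi * (a1 * gj * gj + a * Hjj) + a * (a2 * gi * gj * gj + a1*(Hij * gj + gj * Hij) + a1 * gi * Hjj + a * Tj))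
   = (c*gj*(b1*gi*gj + b*Hij) + F*(b2*gj*gi*gj + b1*(Hij*gj + gi*Hjj) + b1*gj*Hij + b*Tj))
     - ((- p*c1*gi) * (b1*gj*gj + b*Hjj) + (F - p*c) * (b2*gi*gj*gj + b1*(Hij*gj + gj*Hij) + b1*gi*Hjj + b*Tj))"
  using q unfolding p_def b_def b1_def b2_def c_def c1_def
  by (simp add: field_simps power2_eq_square) (simp add: algebra_simps)?



lemma scal:
  fixes K \<phi> F :: "real \<Rightarrow> real"
  assumes K_smooth: "smooth_on1 {0<..} K"
    and K_pos: "\<forall>s>0. K s > 0"
    and s: "s > 0"
  shows "DERIV (\<lambda>s. sqrt (K s)) s :> deriv K s / (2 * sqrt (K s))"
    and "DERIV (\<lambda>s. deriv K s / (2 * sqrt (K s))) s :>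
          (deriv (deriv K) s * sqrt (K s) - deriv K s * (deriv K s / (2 * sqrt (K s)))) / (2 * K s)"
proof -
  have "(deriv^^0) K differentiable (at s)" "(deriv^^1) K differentiable (at s)"
    using K_smooth s unfolding smooth_on1_def by (metis greaterThan_iff)+
  then have dK: "DERIV K s :> deriv K s" and dK1: "DERIV (deriv K) s :> deriv (deriv K) s"
    by (simp_all add: DERIV_deriv_iff_real_differentiable)
  have Kp: "K s > 0" using K_pos s by blast
  have d1: "DERIV (\<lambda>s. sqrt (K s)) s :> inverse (sqrt (K s)) / 2 * deriv K s"
    by (rule DERIV_chain2[OF DERIV_real_sqrt[OF Kp] dK])
  moreover have "inverse (sqrt (K s)) / 2 * deriv K s = deriv K s / (2 * sqrt (K s))"
    by (simp add: field_simps)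
  ultimately show da: "DERIV (\<lambda>s. sqrt (K s)) s :> deriv K s / (2 * sqrt (K s))" by metis
  have d2: "DERIV (\<lambda>s. 2 * sqrt (K s)) s :> 2 * (deriv K s / (2 * sqrt (K s)))"
    by (rule DERIV_cmult[OF da])
  have "DERIV (\<lambda>s. deriv K s / (2 * sqrt (K s))) s :>
     (deriv (deriv K) s * (2 * sqrt (K s)) - deriv K s * (2 * (deriv K s / (2 * sqrt (K s))))) / ((2 * sqrt (K s)) * (2 * sqrt (K s)))"
    by (rule DERIV_divide[OF dK1 d2]) (use Kp in simp)
  moreover have "(deriv (deriv K) s * (2 * sqrt (K s)) - deriv K s * (2 * (deriv K s / (2 * sqrt (K s))))) / ((2 * sqrt (K s)) * (2 * sqrt (K s)))
     = (deriv (deriv K) s * sqrt (K s) - deriv K s * (deriv K s / (2 * sqrt (K s)))) / (2 * K s)"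
    using Kp by (simp add: field_simps)
  ultimately show "DERIV (\<lambda>s. deriv K s / (2 * sqrt (K s))) s :>
          (deriv (deriv K) s * sqrt (K s) - deriv K s * (deriv K s / (2 * sqrt (K s)))) / (2 * K s)" by metis
qed



lemma DERIV_eqv: "DERIV f s :> u \<Longrightarrow> u = v \<Longrightarrow> DERIV f s :> v" by simp

lemma algq:
  fixes q A A1 A2 :: real
  assumes "q > 0"
  shows "(A2 * q - A1 * (inverse q / 2)) / (q * q) - (A1 * (2 * (q*q) * q) - A * (2 * q + (q*q) * inverse q)) / ((2 * (q*q) * q) * (2 * (q*q) * q))
     = A2 / q - A1 / ((q*q) * q) + 3 * A / (4 * (q*q)^2 * q)"
  using assms by (simp add: field_simps power2_eq_square)

lemma scal2:
  fixes a a1 a2 :: "real \<Rightarrow> real"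
  assumes da: "DERIV a s :> a1 s" and da1: "DERIV a1 s :> a2 s" and s: "s > 0"
  shows "DERIV (\<lambda>s. a s / sqrt s) s :> a1 s / sqrt s - a s / (2 * s * sqrt s)"
    and "DERIV (\<lambda>s. a1 s / sqrt s - a s / (2 * s * sqrt s)) s :>
           a2 s / sqrt s - a1 s / (s * sqrt s) + 3 * a s / (4 * s^2 * sqrt s)"
    and "DERIV (\<lambda>s. a s * sqrt s) s :> a1 s * sqrt s + a s / (2 * sqrt s)"
proof -
  have dq: "DERIV sqrt s :> inverse (sqrt s) / 2" using DERIV_real_sqrt[OF s] .
  have q: "sqrt s > 0" using s by simp
  have qq: "sqrt s * sqrt s = s" using s by simp
  show "DERIV (\<lambda>s. a s / sqrt s) s :> a1 s / sqrt s - a s / (2 * s * sqrt s)"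
    apply (rule DERIV_eqv[OF DERIV_divide[OF da dq]])
    using q apply simp
    using q qq by (simp add: field_simps)
  have dg: "DERIV (\<lambda>s. 2 * s * sqrt s) s :> 2 * sqrt s + s * inverse (sqrt s)"
    apply (rule DERIV_eqv[OF DERIV_mult[OF DERIV_cmult[OF DERIV_ident, of 2] dq]])
    by (simp add: algebra_simps)
  have t1: "DERIV (\<lambda>s. a1 s / sqrt s) s :> (a2 s * sqrt s - a1 s * (inverse (sqrt s) / 2)) / (sqrt s * sqrt s)"
    by (rule DERIV_divide[OF da1 dq]) (use q in simp)
  have t2: "DERIV (\<lambda>s. a s / (2 * s * sqrt s)) s :> (a1 s * (2 * s * sqrt s) - a s * (2 * sqrt s + s * inverse (sqrt s))) / ((2 * s * sqrt s) * (2 * s * sqrt s))"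
    by (rule DERIV_divide[OF da dg]) (use q s in simp)
  show "DERIV (\<lambda>s. a1 s / sqrt s - a s / (2 * s * sqrt s)) s :>
           a2 s / sqrt s - a1 s / (s * sqrt s) + 3 * a s / (4 * s^2 * sqrt s)"
    apply (rule DERIV_eqv[OF DERIV_diff[OF t1 t2]])
    using algq[of "sqrt s" "a2 s" "a1 s" "a s"] q s by simp
  show "DERIV (\<lambda>s. a s * sqrt s) s :> a1 s * sqrt s + a s / (2 * sqrt s)"
    apply (rule DERIV_eqv[OF DERIV_mult[OF da dq]])
    by (simp add: field_simps)
qed



lemma alg':
  fixes p a a1 a2 F gi gj Hij Hjj Tj :: real
  assumes p: "p > 0"
  shows "p * (a1 * gi * (a1 * gj * gj + a * Hjj) + a * (a2 * gi * gj * gj + a1*(Hij * gj + gj * Hij) + a1 * gi * Hjj + a * Tj))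
   = ((a * sqrt p)*gj*((a1 / sqrt p - a / (2 * p * sqrt p))*gi*gj + (a / sqrt p)*Hij) + F*((a2 / sqrt p - a1 / (p * sqrt p) + 3 * a / (4 * p^2 * sqrt p))*gj*gi*gj + (a1 / sqrt p - a / (2 * p * sqrt p))*(Hij*gj + gi*Hjj) + (a1 / sqrt p - a / (2 * p * sqrt p))*gj*Hij + (a / sqrt p)*Tj))
     - ((- p*(a1 * sqrt p + a / (2 * sqrt p))*gi) * ((a1 / sqrt p - a / (2 * p * sqrt p))*gj*gj + (a / sqrt p)*Hjj) + (F - p*(a * sqrt p)) * ((a2 / sqrt p - a1 / (p * sqrt p) + 3 * a / (4 * p^2 * sqrt p))*gi*gj*gj + (a1 / sqrt p - a / (2 * p * sqrt p))*(Hij*gj + gj*Hij) + (a1 / sqrt p - a / (2 * p * sqrt p))*gi*Hjj + (a / sqrt p)*Tj))"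
proof -
  obtain q where q: "q > 0" "p = q^2" using p by (metis real_sqrt_gt_0_iff real_sqrt_pow2 less_imp_le)
  have sq: "sqrt p = q" using q by simp
  show ?thesis unfolding sq using q by (simp add: field_simps power2_eq_square)
qed

lemma sumL: "(p::real)*(A*(\<Sum>j\<in>U. X j) + B*(\<Sum>j\<in>U. Y j)) = (\<Sum>j\<in>U. p*(A*X j + B*Y j))"
  by (simp add: sum_distrib_left sum.distrib ring_distribs)

lemma sumR: "(\<Sum>j\<in>U. Z j) - (C*(\<Sum>j\<in>U. X j) + D*(\<Sum>j\<in>U. Y j)) = (\<Sum>j\<in>U. (Z j::real) - (C*X j + D*Y j))"
  by (simp add: sum_distrib_left sum.distrib ring_distribs sum_subtractf)

theorem mainTheorem1:
  fixes K \<Phi> \<phi> F :: "real \<Rightarrow> real"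
    and \<Omega> :: "(real^'n::finite) set"
    and \<rho> :: "real^'n \<Rightarrow> real"
  assumes K_smooth: "smooth_on1 {0<..} K"
    and K_pos: "\<forall>s>0. K s > 0"
    and Phi_anti: "\<forall>s>0. (\<Phi> has_real_derivative sqrt (K s)) (at s)"
    and phi_smooth: "smooth_on1 {0<..} \<phi>"
    and F_smooth: "smooth_on1 {0<..} F"
    and phi_eq: "\<forall>s>0. sqrt s * deriv \<phi> s = sqrt (K s)"
    and F_eq: "\<forall>s>0. deriv F s = sqrt (K s * s)"
    and \<Omega>_open: "open \<Omega>"
    and rho_smooth: "smooth_on \<Omega> \<rho>"
    and rho_pos: "\<forall>x\<in>\<Omega>. \<rho> x > 0"
  shows "\<forall>x\<in>\<Omega>. \<forall>i.
     \<rho> x * pd i (\<lambda>y. sqrt (K (\<rho> y)) * lap (\<lambda>z. \<Phi> (\<rho> z)) y) x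
     = (\<Sum>j\<in>UNIV. pd j (\<lambda>y. F (\<rho> y) * pd i (pd j (\<lambda>z. \<phi> (\<rho> z))) y) x)
       - pd i (\<lambda>y. (F (\<rho> y) - \<rho> y * deriv F (\<rho> y)) * lap (\<lambda>z. \<phi> (\<rho> z)) y) x"
proof (intro ballI allI)
  fix x i assume x: "x \<in> \<Omega>"
  define a where "a = (\<lambda>s. sqrt (K s))"
  define a1 where "a1 = (\<lambda>s. deriv K s / (2 * sqrt (K s)))"
  define a2 where "a2 = (\<lambda>s. (deriv (deriv K) s * sqrt (K s) - deriv K s * (deriv K s / (2 * sqrt (K s)))) / (2 * K s))"
  define b where "b = (\<lambda>s. a s / sqrt s)"
  define b1 where "b1 = (\<lambda>s. a1 s / sqrt s - a s / (2 * s * sqrt s))"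
  define b2 where "b2 = (\<lambda>s. a2 s / sqrt s - a1 s / (s * sqrt s) + 3 * a s / (4 * s^2 * sqrt s))"
  define c where "c = (\<lambda>s. a s * sqrt s)"
  define c1 where "c1 = (\<lambda>s. a1 s * sqrt s + a s / (2 * sqrt s))"
  define e where "e = (\<lambda>s. F s - s * deriv F s)"
  have da: "DERIV a s :> a1 s" if "s > 0" for s
    using scal(1)[OF K_smooth K_pos that] unfolding a_def a1_def by simp
  have da1: "DERIV a1 s :> a2 s" if "s > 0" for s
    using scal(2)[OF K_smooth K_pos that] unfolding a1_def a2_def by simp
  have db: "DERIV b s :> b1 s" if "s > 0" for s
    using scal2(1)[of a a1 s a2, OF da[OF that] da1[OF that] that] unfolding b_def b1_def by simp
  have db1: "DERIV b1 s :> b2 s" if "s > 0" for s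
    using scal2(2)[of a a1 s a2, OF da[OF that] da1[OF that] that] unfolding b1_def b2_def by simp
  have dc: "DERIV c s :> c1 s" if "s > 0" for s
    using scal2(3)[of a a1 s a2, OF da[OF that] da1[OF that] that] unfolding c_def c1_def by simp
  have dPhi: "DERIV \<Phi> s :> a s" if "s > 0" for s
    using Phi_anti that unfolding a_def by simp
  have dphi: "DERIV \<phi> s :> b s" if "s > 0" for s
  proof -
    have "(deriv^^0) \<phi> differentiable (at s)" using phi_smooth that unfolding smooth_on1_def by (metis greaterThan_iff)
    then have "DERIV \<phi> s :> deriv \<phi> s" by (simp add: DERIV_deriv_iff_real_differentiable)
    moreover have "deriv \<phi> s = b s" using phi_eq that unfolding b_def a_def
      by (metis nonzero_mult_div_cancel_left real_sqrt_gt_0_iff less_irrefl)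
    ultimately show ?thesis by simp
  qed
  have dFc: "deriv F s = c s" if "s > 0" for s
    using F_eq that unfolding c_def a_def by (simp add: real_sqrt_mult)
  have dF: "DERIV F s :> c s" if "s > 0" for s
  proof -
    have "(deriv^^0) F differentiable (at s)" using F_smooth that unfolding smooth_on1_def by (metis greaterThan_iff)
    then have "DERIV F s :> deriv F s" by (simp add: DERIV_deriv_iff_real_differentiable)
    then show ?thesis using dFc[OF that] by simp
  qed
  have de: "DERIV e s :> - s * c1 s" if "s > 0" for s
  proof -
    have "DERIV (deriv F) s :> c1 s"
      by (rule has_field_derivative_transform_within_open[OF dc[OF that], of "{0<..}"])
         (use that dFc in auto)
    then have "DERIV e s :> c s - (1 * deriv F s + c1 s * s)"
      unfolding e_def by (intro DERIV_diff dF that DERIV_mult DERIV_ident)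
    then show ?thesis using dFc[OF that] by (simp add: algebra_simps)
  qed
  have sm: "\<And>is y. y \<in> \<Omega> \<Longrightarrow> pds is \<rho> differentiable (at y)"
    using rho_smooth unfolding smooth_on_def by blast
  have pos: "\<And>y. y \<in> \<Omega> \<Longrightarrow> \<rho> y > 0" using rho_pos by blast
  interpret P: cctx \<Omega> \<rho> \<Phi> a a1 a2
    by unfold_locales (auto intro: \<Omega>_open sm pos dPhi da da1)
  interpret Q: cctx \<Omega> \<rho> \<phi> b b1 b2
    by unfold_locales (auto intro: \<Omega>_open sm pos dphi db db1)
  define p where "p = \<rho> x"
  have p: "p > 0" using pos[OF x] unfolding p_def .
  have lapd: "lap f = (\<lambda>y. \<Sum>j\<in>UNIV. pd j (pd j f) y)" for f :: "real^'n \<Rightarrow> real"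
    by (simp add: lap_def fun_eq_iff)
  have sym2: "pd j (pd i \<rho>) x = pd i (pd j \<rho>) x" for j
    by (rule schwarz[OF \<Omega>_open x])
       (auto intro: P.r0 P.r1 differentiable_imp_continuous_within P.r2 x)
  have sym3: "pd j (pd i (pd j \<rho>)) x = pd i (pd j (pd j \<rho>)) x" for j
    by (rule schwarz[OF \<Omega>_open x])
       (auto intro: P.r1 P.r2 differentiable_imp_continuous_within P.r3 x)
  have dax: "(\<lambda>y. a (\<rho> y)) differentiable (at x)"
    by (rule diff_comp[OF da P.r0[OF x]]) (rule pos[OF x])
  have dFx: "(\<lambda>y. F (\<rho> y)) differentiable (at x)"
    by (rule diff_comp[OF dF P.r0[OF x]]) (rule pos[OF x])
  have dex: "(\<lambda>y. e (\<rho> y)) differentiable (at x)"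
    by (rule diff_comp[OF de P.r0[OF x]]) (rule pos[OF x])
  have E1: "pd i (\<lambda>y. sqrt (K (\<rho> y)) * lap (\<lambda>z. \<Phi> (\<rho> z)) y) x
     = (a1 p * pd i \<rho> x) * (\<Sum>j\<in>UNIV. a1 p * pd j \<rho> x * pd j \<rho> x + a p * pd j (pd j \<rho>) x)
       + a p * (\<Sum>j\<in>UNIV. a2 p * pd i \<rho> x * pd j \<rho> x * pd j \<rho> x
          + a1 p * (pd i (pd j \<rho>) x * pd j \<rho> x + pd j \<rho> x * pd i (pd j \<rho>) x)
          + a1 p * pd i \<rho> x * pd j (pd j \<rho>) x + a p * pd i (pd j (pd j \<rho>)) x)"
  proof -
    have dl: "lap (\<lambda>z. \<Phi> (\<rho> z)) differentiable (at x)"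
      unfolding lapd by (intro differentiable_sum) (auto intro: P.D2 x)
    have "pd i (\<lambda>y. sqrt (K (\<rho> y)) * lap (\<lambda>z. \<Phi> (\<rho> z)) y) x
        = pd i (\<lambda>y. a (\<rho> y) * lap (\<lambda>z. \<Phi> (\<rho> z)) y) x" by (simp add: a_def)
    also have "\<dots> = pd i (\<lambda>y. a (\<rho> y)) x * lap (\<lambda>z. \<Phi> (\<rho> z)) x + a (\<rho> x) * pd i (lap (\<lambda>z. \<Phi> (\<rho> z))) x"
      by (rule pd_mult[OF dax dl])
    finally have c0: "pd i (\<lambda>y. sqrt (K (\<rho> y)) * lap (\<lambda>z. \<Phi> (\<rho> z)) y) x
       = pd i (\<lambda>y. a (\<rho> y)) x * lap (\<lambda>z. \<Phi> (\<rho> z)) x + a (\<rho> x) * pd i (lap (\<lambda>z. \<Phi> (\<rho> z))) x" .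
    have l0: "pd i (\<lambda>y. a (\<rho> y)) x = a1 p * pd i \<rho> x" unfolding p_def
      by (rule pd_comp[OF da P.r0[OF x]]) (rule pos[OF x])
    have l1: "lap (\<lambda>z. \<Phi> (\<rho> z)) x = (\<Sum>j\<in>UNIV. a1 p * pd j \<rho> x * pd j \<rho> x + a p * pd j (pd j \<rho>) x)"
      unfolding lapd p_def using P.C2[OF x] by simp
    have l2: "pd i (lap (\<lambda>z. \<Phi> (\<rho> z))) x = (\<Sum>j\<in>UNIV. pd i (pd j (pd j (\<lambda>z. \<Phi> (\<rho> z)))) x)"
      unfolding lapd by (rule pd_sum) (rule P.D2[OF x])
    show ?thesis unfolding c0 l0 l1 l2 using P.C3[OF x] by (simp add: p_def)
  qed
  have E2: "pd j (\<lambda>y. F (\<rho> y) * pd i (pd j (\<lambda>z. \<phi> (\<rho> z))) y) x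
     = (c p * pd j \<rho> x) * (b1 p * pd i \<rho> x * pd j \<rho> x + b p * pd i (pd j \<rho>) x)
       + F p * (b2 p * pd j \<rho> x * pd i \<rho> x * pd j \<rho> x
          + b1 p * (pd j (pd i \<rho>) x * pd j \<rho> x + pd i \<rho> x * pd j (pd j \<rho>) x)
          + b1 p * pd j \<rho> x * pd i (pd j \<rho>) x + b p * pd j (pd i (pd j \<rho>)) x)" for j
  proof -
    have c0: "pd j (\<lambda>y. F (\<rho> y) * pd i (pd j (\<lambda>z. \<phi> (\<rho> z))) y) x
       = pd j (\<lambda>y. F (\<rho> y)) x * pd i (pd j (\<lambda>z. \<phi> (\<rho> z))) x + F (\<rho> x) * pd j (pd i (pd j (\<lambda>z. \<phi> (\<rho> z)))) x"
      by (rule pd_mult[OF dFx Q.D2[OF x]])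
    have l0: "pd j (\<lambda>y. F (\<rho> y)) x = c p * pd j \<rho> x" unfolding p_def
      by (rule pd_comp[OF dF P.r0[OF x]]) (rule pos[OF x])
    show ?thesis unfolding c0 l0 Q.C2[OF x] Q.C3[OF x] p_def ..
  qed
  have E3: "pd i (\<lambda>y. (F (\<rho> y) - \<rho> y * deriv F (\<rho> y)) * lap (\<lambda>z. \<phi> (\<rho> z)) y) x
     = (- p * c1 p * pd i \<rho> x) * (\<Sum>j\<in>UNIV. b1 p * pd j \<rho> x * pd j \<rho> x + b p * pd j (pd j \<rho>) x)
       + (F p - p * c p) * (\<Sum>j\<in>UNIV. b2 p * pd i \<rho> x * pd j \<rho> x * pd j \<rho> x
          + b1 p * (pd i (pd j \<rho>) x * pd j \<rho> x + pd j \<rho> x * pd i (pd j \<rho>) x)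
          + b1 p * pd i \<rho> x * pd j (pd j \<rho>) x + b p * pd i (pd j (pd j \<rho>)) x)"
  proof -
    have dl: "lap (\<lambda>z. \<phi> (\<rho> z)) differentiable (at x)"
      unfolding lapd by (intro differentiable_sum) (auto intro: Q.D2 x)
    have "pd i (\<lambda>y. (F (\<rho> y) - \<rho> y * deriv F (\<rho> y)) * lap (\<lambda>z. \<phi> (\<rho> z)) y) x
        = pd i (\<lambda>y. e (\<rho> y) * lap (\<lambda>z. \<phi> (\<rho> z)) y) x" by (simp add: e_def)
    also have "\<dots> = pd i (\<lambda>y. e (\<rho> y)) x * lap (\<lambda>z. \<phi> (\<rho> z)) x + e (\<rho> x) * pd i (lap (\<lambda>z. \<phi> (\<rho> z))) x"
      by (rule pd_mult[OF dex dl])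
    finally have c0: "pd i (\<lambda>y. (F (\<rho> y) - \<rho> y * deriv F (\<rho> y)) * lap (\<lambda>z. \<phi> (\<rho> z)) y) x
       = pd i (\<lambda>y. e (\<rho> y)) x * lap (\<lambda>z. \<phi> (\<rho> z)) x + e (\<rho> x) * pd i (lap (\<lambda>z. \<phi> (\<rho> z))) x" .
    have l0: "pd i (\<lambda>y. e (\<rho> y)) x = (- p * c1 p) * pd i \<rho> x" unfolding p_def
      by (rule pd_comp[OF de P.r0[OF x]]) (rule pos[OF x])
    have l1: "lap (\<lambda>z. \<phi> (\<rho> z)) x = (\<Sum>j\<in>UNIV. b1 p * pd j \<rho> x * pd j \<rho> x + b p * pd j (pd j \<rho>) x)"
      unfolding lapd p_def using Q.C2[OF x] by simp
    have l2: "pd i (lap (\<lambda>z. \<phi> (\<rho> z))) x = (\<Sum>j\<in>UNIV. pd i (pd j (pd j (\<lambda>z. \<phi> (\<rho> z)))) x)"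
      unfolding lapd by (rule pd_sum) (rule Q.D2[OF x])
    have l3: "e (\<rho> x) = F p - p * c p" unfolding e_def p_def using dFc[OF pos[OF x]] by simp
    show ?thesis unfolding c0 l0 l1 l2 l3 using Q.C3[OF x] by (simp add: p_def)
  qed
  show "\<rho> x * pd i (\<lambda>y. sqrt (K (\<rho> y)) * lap (\<lambda>z. \<Phi> (\<rho> z)) y) x
     = (\<Sum>j\<in>UNIV. pd j (\<lambda>y. F (\<rho> y) * pd i (pd j (\<lambda>z. \<phi> (\<rho> z))) y) x)
       - pd i (\<lambda>y. (F (\<rho> y) - \<rho> y * deriv F (\<rho> y)) * lap (\<lambda>z. \<phi> (\<rho> z)) y) x"
    unfolding E1 E2 E3 p_def[symmetric] sumL sumR
  proof (rule sum.cong[OF refl])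
    fix j :: 'n
    show "p * (a1 p * pd i \<rho> x * (a1 p * pd j \<rho> x * pd j \<rho> x + a p * pd j (pd j \<rho>) x) +
           a p * (a2 p * pd i \<rho> x * pd j \<rho> x * pd j \<rho> x
          + a1 p * (pd i (pd j \<rho>) x * pd j \<rho> x + pd j \<rho> x * pd i (pd j \<rho>) x)
          + a1 p * pd i \<rho> x * pd j (pd j \<rho>) x + a p * pd i (pd j (pd j \<rho>)) x))
      = (c p * pd j \<rho> x) * (b1 p * pd i \<rho> x * pd j \<rho> x + b p * pd i (pd j \<rho>) x)
       + F p * (b2 p * pd j \<rho> x * pd i \<rho> x * pd j \<rho> x
          + b1 p * (pd j (pd i \<rho>) x * pd j \<rho> x + pd i \<rho> x * pd j (pd j \<rho>) x)
          + b1 p * pd j \<rho> x * pd i (pd j \<rho>) x + b p * pd j (pd i (pd j \<rho>)) x)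
      - ((- p * c1 p * pd i \<rho> x) * (b1 p * pd j \<rho> x * pd j \<rho> x + b p * pd j (pd j \<rho>) x)
       + (F p - p * c p) * (b2 p * pd i \<rho> x * pd j \<rho> x * pd j \<rho> x
          + b1 p * (pd i (pd j \<rho>) x * pd j \<rho> x + pd j \<rho> x * pd i (pd j \<rho>) x)
          + b1 p * pd i \<rho> x * pd j (pd j \<rho>) x + b p * pd i (pd j (pd j \<rho>)) x))"
      unfolding sym2 sym3 b_def b1_def b2_def c_def c1_def
      by (rule alg'[OF p])
  qed
qed


end
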